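(* Let $a,b,d<0$ be fixed real numbers. Then there exists $c^*\in\mathbb{R}$ such that for every real $c>c^*$, every polynomial $W_n(z)$ ($n\ge0$) of the normalised sequence defined below is real-rooted.
   Context: Put $A(z)=az+b$, $B(z)=cz+d$ with $c\in\mathbb{R}$, $c\ne0$. The normalised sequence $\{W_n(z)\}_{n\ge0}$ is defined by $W_0(z)=1$, $W_1(z)=z$ and $W_n(z)=A(z)W_{n-1}(z)+B(z)W_{n-2}(z)$ for $n\ge2$. Real-rooted means all zeros are real. *)

theory Defs
  imports "HOL-Computational_Algebra.Polynomial"
begin

text \<open>The normalised sequence: W_0 = 1, W_1 = z,
  W_n = A W_(n-1) + B W_(n-2) with A(z) = a z + b, B(z) = c z + d.\<close>
fun W :: "real \<Rightarrow> real \<Rightarrow> real \<Rightarrow> real \<Rightarrow> nat \<Rightarrow> real poly" where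
  "W a b c d 0 = 1"
| "W a b c d (Suc 0) = [:0, 1:]"
| "W a b c d (Suc (Suc n)) =
     [:b, a:] * W a b c d (Suc n) + [:d, c:] * W a b c d n"

definition real_rooted :: "real poly \<Rightarrow> bool" where
  "real_rooted p \<longleftrightarrow> (\<forall>z::complex. poly (map_poly complex_of_real p) z = 0 \<longrightarrow> z \<in> \<real>)"

end

theory Submission
  imports Defs
begin

lemma W_deg_coeff: "degree (W a b c d n) \<le> n \<and> coeff (W a b c d n) n = a ^ (n - 1)"
proof (induction a b c d n rule: W.induct)
  case (1 a b c d) then show ?case by simp
next
  case (2 a b c d) then show ?case by simp
next
  case (3 a b c d n)
  let ?p = "W a b c d (Suc n)" and ?q = "W a b c d n"
  have e: "W a b c d (Suc (Suc n)) = smult b ?p + pCons 0 (smult a ?p) + (smult d ?q + pCons 0 (smult c ?q))"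
    by (simp add: mult_pCons_left)
  have i1: "degree ?p \<le> Suc n" "coeff ?p (Suc n) = a ^ n" using 3 by auto
  have i2: "degree ?q \<le> n" using 3 by auto
  have d1: "degree (smult b ?p + pCons 0 (smult a ?p)) \<le> Suc (Suc n)"
  proof (rule degree_add_le)
    show "degree (smult b ?p) \<le> Suc (Suc n)" using degree_smult_le[of b ?p] i1 by linarith
    show "degree (pCons 0 (smult a ?p)) \<le> Suc (Suc n)"
      using degree_pCons_le[of 0 "smult a ?p"] degree_smult_le[of a ?p] i1 by linarith
  qed
  have d2: "degree (smult d ?q + pCons 0 (smult c ?q)) \<le> Suc n"
  proof (rule degree_add_le)
    show "degree (smult d ?q) \<le> Suc n" using degree_smult_le[of d ?q] i2 by linarith
    show "degree (pCons 0 (smult c ?q)) \<le> Suc n"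
      using degree_pCons_le[of 0 "smult c ?q"] degree_smult_le[of c ?q] i2 by linarith
  qed
  have deg: "degree (W a b c d (Suc (Suc n))) \<le> Suc (Suc n)"
    unfolding e by (rule degree_add_le[OF d1]) (use d2 in linarith)
  have c1: "coeff ?p (Suc (Suc n)) = 0" using i1 by (intro coeff_eq_0) auto
  have c2: "coeff ?q (Suc n) = 0" using i2 by (intro coeff_eq_0) auto
  have c3: "coeff ?q (Suc (Suc n)) = 0" using i2 by (intro coeff_eq_0) auto
  have "coeff (W a b c d (Suc (Suc n))) (Suc (Suc n)) = a * a ^ n"
    unfolding e using i1 c1 c2 c3 by simp
  then show ?case using deg by simp
qed

lemma W_degree: "a \<noteq> 0 \<Longrightarrow> degree (W a b c d n) = n"
  using W_deg_coeff[of a b c d n] by (metis le_antisym le_degree power_not_zero)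

lemma W_lead: "a \<noteq> 0 \<Longrightarrow> lead_coeff (W a b c d n) = a ^ (n - 1)"
  using W_deg_coeff[of a b c d n] W_degree by metis

lemma W_rec: "poly (W a b c d (Suc (Suc n))) t = (a*t+b) * poly (W a b c d (Suc n)) t + (c*t+d) * poly (W a b c d n) t"
  by (simp add: algebra_simps)

lemma W_z0: "n \<ge> 1 \<Longrightarrow> c * z0 + d = 0 \<Longrightarrow> poly (W a b c d n) z0 = (a*z0+b)^(n-1) * z0"
proof (induction a b c d n rule: W.induct)
  case (3 a b c d n)
  have "poly (W a b c d (Suc (Suc n))) z0 = (a*z0+b) * poly (W a b c d (Suc n)) z0"
    using W_rec[of a b c d n z0] 3(4) by simp
  also have "\<dots> = (a*z0+b) * ((a*z0+b)^n * z0)" using 3 by simp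
  finally show ?case by simp
qed auto

lemma pinfty_pos: fixes f :: "real poly" assumes "lead_coeff f > 0" shows "\<exists>N. \<forall>x\<ge>N. poly f x > 0"
  using poly_pinfty_gt_lc[OF assms] assms by (meson less_le_trans)

lemma minfty_pos: fixes f :: "real poly" assumes "lead_coeff f * (-1) ^ degree f > 0" shows "\<exists>N. \<forall>x\<le>N. poly f x > 0"
proof -
  let ?g = "pcompose f [:0,-1:]"
  have "lead_coeff ?g = lead_coeff f * (-1) ^ degree f"
    by (subst lead_coeff_comp) auto
  then obtain N where N: "\<forall>x\<ge>N. poly ?g x > 0" using pinfty_pos assms by metis
  show ?thesis
  proof (intro exI allI impI)
    fix x assume "x \<le> -N"
    then have "poly ?g (-x) > 0" using N by auto
    then show "poly f x > 0" by (simp add: poly_pcompose)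
  qed
qed

lemma real_rooted_count:
  fixes f :: "real poly"
  assumes "f \<noteq> 0" "finite S" "card S = degree f" "\<And>x. x \<in> S \<Longrightarrow> poly f x = 0"
  shows "real_rooted f" "\<And>x. poly f x = 0 \<Longrightarrow> x \<in> S"
proof -
  let ?P = "map_poly complex_of_real f"
  have pof: "poly ?P (of_real x) = of_real (poly f x)" for x
    by (induction f) (auto simp: map_poly_pCons)
  have degP: "degree ?P = degree f" by (rule degree_map_poly) auto
  have P0: "?P \<noteq> 0"
  proof
    assume "?P = 0"
    then have "poly f x = 0" for x using pof[of x] by simp
    then have "f = 0" by (simp add: poly_eq_poly_eq_iff[symmetric] fun_eq_iff)
    then show False using assms(1) by simp
  qed
  show "real_rooted f" unfolding real_rooted_def
  proof (intro allI impI)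
    fix z assume z: "poly ?P z = 0"
    show "z \<in> \<real>"
    proof (rule ccontr)
      assume nz: "z \<notin> \<real>"
      have sub: "insert z (of_real ` S) \<subseteq> {x. poly ?P x = 0}"
        using z assms(4) pof by auto
      have zn: "z \<notin> of_real ` S" using nz by (auto simp: Reals_def)
      have ci: "card (of_real ` S :: complex set) = card S" by (rule card_image) (auto simp: inj_on_def)
      have "Suc (card S) = card (insert z (of_real ` S))"
        using zn assms(2) ci by simp
      also have "card (insert z (of_real ` S)) \<le> card {x. poly ?P x = 0}"
        using sub by (intro card_mono poly_roots_finite P0)
      also have "\<dots> \<le> degree f" using card_poly_roots_bound[OF P0] degP by simp
      finally show False using assms(3) by simp
    qed
  qed
  have R: "{x. poly f x = 0} = S"
  proof -
    have "S \<subseteq> {x. poly f x = 0}" using assms(4) by auto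
    moreover have "card {x. poly f x = 0} \<le> card S" using card_poly_roots_bound[OF assms(1)] assms(3) by simp
    ultimately show ?thesis using poly_roots_finite[OF assms(1)] by (metis card_seteq)
  qed
  fix x assume "poly f x = 0" then show "x \<in> S" using R by auto
qed

lemma sgn_pow: "((-1::real)^k * x > 0) = (if even k then x > 0 else x < 0)"
  by (cases "even k") auto

lemma sgn_opp: "(-1::real)^k * x > 0 \<Longrightarrow> (-1)^(Suc k) * y > 0 \<Longrightarrow> x * y < 0"
  by (cases "even k") (auto simp: sgn_pow mult_pos_neg mult_neg_pos)

definition Inv :: "real poly \<Rightarrow> real \<Rightarrow> nat \<Rightarrow> (nat \<Rightarrow> real) \<Rightarrow> bool" where
  "Inv f z0 m x \<longleftrightarrow> (\<forall>i<m. x i < z0 \<and> poly f (x i) = 0) \<and> (\<forall>i j. i < j \<longrightarrow> j < m \<longrightarrow> x i < x j) \<and>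
     (\<forall>t j. t \<le> z0 \<longrightarrow> j \<le> m \<longrightarrow> (j = 0 \<or> x (j-1) < t) \<longrightarrow> (j = m \<or> t < x j) \<longrightarrow> (-1)^(j+1) * poly f t > 0)"

definition interl :: "nat \<Rightarrow> (nat \<Rightarrow> real) \<Rightarrow> (nat \<Rightarrow> real) \<Rightarrow> bool" where
  "interl m x y \<longleftrightarrow> (\<forall>j\<le>m. (j = 0 \<or> y (j-1) < x j) \<and> (j < m \<longrightarrow> x j < y j))"

locale wsetup =
  fixes a b c d z0 p :: real
  assumes an: "a < 0" and bn: "b < 0" and dn: "d < 0" and cp: "c > 0"
    and z0: "c * z0 + d = 0" and pz: "z0 < p"
    and ppos: "\<And>k. k \<ge> 2 \<Longrightarrow> (-1)^k * poly (W a b c d k) p > 0"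
begin

lemma z0pos: "z0 > 0"
proof -
  have "c * z0 > 0" using z0 dn by linarith
  then show ?thesis using cp by (simp add: zero_less_mult_iff)
qed

lemma Az0: "a * z0 + b < 0"
  using an bn z0pos by (simp add: mult_neg_pos add_neg_neg)

lemma sz0: "k \<ge> 1 \<Longrightarrow> (-1)^(k-1) * poly (W a b c d k) z0 > 0"
proof -
  assume k: "k \<ge> 1"
  have "(-1)^(k-1) * poly (W a b c d k) z0 = (-1)^(k-1) * ((a*z0+b)^(k-1) * z0)"
    by (simp only: W_z0[OF k z0])
  also have "\<dots> = (-(a*z0+b))^(k-1) * z0" by (simp only: power_minus[of "a*z0+b"] mult.assoc)
  also have "\<dots> > 0" using Az0 z0pos by simp
  finally show ?thesis .
qed

lemma Wnz: "W a b c d k \<noteq> 0 \<or> k = 0"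
  using W_degree[of a b c d k] an by auto

lemma far_right: "k \<ge> 1 \<Longrightarrow> \<exists>N. \<forall>x\<ge>N. (-1)^(k-1) * poly (W a b c d k) x > 0"
proof -
  assume k: "k \<ge> 1"
  have "lead_coeff (smult ((-1)^(k-1)) (W a b c d k)) = (-1)^(k-1) * a^(k-1)"
    using W_lead[of a b c d k] an by simp
  also have "\<dots> = (-a)^(k-1)" by (simp only: power_minus[of a])
  also have "\<dots> > 0" using an by simp
  finally obtain N where "\<forall>x\<ge>N. poly (smult ((-1)^(k-1)) (W a b c d k)) x > 0"
    using pinfty_pos by blast
  then show ?thesis by auto
qed

lemma far_left: "k \<ge> 1 \<Longrightarrow> \<exists>N. \<forall>x\<le>N. poly (W a b c d k) x < 0"
proof -
  assume k: "k \<ge> 1"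
  then obtain j where j: "k = Suc j" by (cases k) auto
  have "lead_coeff (- W a b c d k) * (-1) ^ degree (- W a b c d k) = - (a^j) * (-1)^(Suc j)"
    using W_lead[of a b c d k] W_degree[of a b c d k] an j by simp
  also have "\<dots> = (-1)^j * a^j" by simp
  also have "\<dots> = (-a)^j" by (simp only: power_minus[of a])
  also have "\<dots> > 0" using an by simp
  finally obtain N where "\<forall>x\<le>N. poly (- W a b c d k) x > 0"
    using minfty_pos by blast
  then show ?thesis by auto
qed

lemma right_roots: "k \<ge> 2 \<Longrightarrow> \<exists>r1 r2. z0 < r1 \<and> r1 < p \<and> p < r2 \<and> poly (W a b c d k) r1 = 0 \<and> poly (W a b c d k) r2 = 0"
proof -
  assume k: "k \<ge> 2"
  then obtain j where j: "k = Suc j" by (cases k) auto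
  have s1: "(-1)^j * poly (W a b c d k) z0 > 0" using sz0[of k] k j by simp
  have s2: "(-1)^(Suc j) * poly (W a b c d k) p > 0" using ppos[OF k] j by simp
  obtain r1 where r1: "z0 < r1" "r1 < p" "poly (W a b c d k) r1 = 0"
    using poly_IVT[OF pz sgn_opp[OF s1 s2]] by auto
  obtain N where N: "\<forall>x\<ge>N. (-1)^j * poly (W a b c d k) x > 0" using far_right[of k] k j by auto
  define R where "R = max N (p + 1)"
  have s3: "(-1)^j * poly (W a b c d k) R > 0" using N R_def by auto
  have "p < R" using R_def by auto
  then obtain r2 where r2: "p < r2" "r2 < R" "poly (W a b c d k) r2 = 0"
  proof -
    have "poly (W a b c d k) p * poly (W a b c d k) R < 0" using sgn_opp[OF s3 s2] by (simp add: mult.commute)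
    then show ?thesis using poly_IVT[OF \<open>p < R\<close>] that by blast
  qed
  show ?thesis using r1 r2 by blast
qed

end

context wsetup begin

lemma mkInv:
  assumes k: "k \<ge> 2" and m: "m = k - 2"
    and qmono: "\<And>i j. i < j \<Longrightarrow> j \<le> m \<Longrightarrow> q i < q j"
    and qm: "q m = z0"
    and qs: "\<And>j. j \<le> m \<Longrightarrow> (-1)^(j+1) * poly (W a b c d k) (q j) > 0"
  shows "\<exists>x. Inv (W a b c d k) z0 m x \<and> (\<forall>j<m. q j < x j \<and> x j < q (Suc j)) \<and> real_rooted (W a b c d k)"
proof -
  let ?f = "W a b c d k"
  have "\<forall>j<m. \<exists>y. q j < y \<and> y < q (Suc j) \<and> poly ?f y = 0"
  proof (intro allI impI)
    fix j assume j: "j < m"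
    have s1: "(-1)^(j+1) * poly ?f (q j) > 0" using qs j by auto
    have s2: "(-1)^(Suc (j+1)) * poly ?f (q (Suc j)) > 0" using qs[of "Suc j"] j by simp
    have "poly ?f (q j) * poly ?f (q (Suc j)) < 0" using sgn_opp[OF s1 s2] .
    then show "\<exists>y. q j < y \<and> y < q (Suc j) \<and> poly ?f y = 0"
      using poly_IVT[OF qmono[of j "Suc j"]] j by auto
  qed
  then obtain x where x: "\<And>j. j < m \<Longrightarrow> q j < x j \<and> x j < q (Suc j) \<and> poly ?f (x j) = 0"
    by metis
  have qle: "q i \<le> q j" if "i \<le> j" "j \<le> m" for i j
    using qmono[of i j] that by (cases "i = j") auto
  have xmono: "x i < x j" if "i < j" "j < m" for i j
  proof -
    have "x i < q (Suc i)" using x[of i] that by auto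
    also have "\<dots> \<le> q j" using qle[of "Suc i" j] that by auto
    also have "\<dots> < x j" using x[of j] that by auto
    finally show ?thesis .
  qed
  have xz: "x i < z0" if "i < m" for i
  proof -
    have "x i < q (Suc i)" using x[of i] that by auto
    also have "\<dots> \<le> q m" using qle[of "Suc i" m] that by auto
    finally show ?thesis using qm by simp
  qed
  obtain r1 r2 where r: "z0 < r1" "r1 < p" "p < r2" "poly ?f r1 = 0" "poly ?f r2 = 0"
    using right_roots[OF k] by blast
  define S where "S = insert r1 (insert r2 (x ` {..<m}))"
  have inj: "inj_on x {..<m}"
    unfolding inj_on_def by (metis lessThan_iff linorder_neqE_nat xmono less_irrefl)
  have r1n: "r1 \<notin> x ` {..<m}" using xz r(1) by force
  have r2n: "r2 \<notin> x ` {..<m}" using xz r(1-3) by force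
  have cardS: "card S = k"
    unfolding S_def using r1n r2n inj r(1-3) k m by (simp add: card_image)
  have fnz: "?f \<noteq> 0" using Wnz[of k] k by auto
  have degf: "degree ?f = k" using W_degree an by simp
  have Sroots: "\<And>y. y \<in> S \<Longrightarrow> poly ?f y = 0" unfolding S_def using r x by auto
  have finS: "finite S" unfolding S_def by simp
  have cS: "card S = degree ?f" using cardS degf by simp
  have rr: "real_rooted ?f" using real_rooted_count(1)[OF fnz finS cS Sroots] .
  have allr: "\<And>y. poly ?f y = 0 \<Longrightarrow> y \<in> S" using real_rooted_count(2)[OF fnz finS cS Sroots] .
  have gapsign: "(-1)^(j+1) * poly ?f t > 0"
    if t: "t \<le> z0" "j \<le> m" "j = 0 \<or> x (j-1) < t" "j = m \<or> t < x j" for t j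
  proof -
    define G where "G s \<longleftrightarrow> s \<le> z0 \<and> (j = 0 \<or> x (j-1) < s) \<and> (j = m \<or> s < x j)" for s
    have Gt: "G t" using t G_def by auto
    have Gq: "G (q j)"
    proof -
      have "q j \<le> z0" using qle[of j m] t(2) qm by simp
      moreover have "j = 0 \<or> x (j-1) < q j" using x[of "j-1"] t(2) by (cases j) auto
      moreover have "j = m \<or> q j < x j" using x[of j] t(2) by (cases "j < m") auto
      ultimately show ?thesis using G_def by auto
    qed
    have noroot: "poly ?f s \<noteq> 0" if "G s" for s
    proof
      assume "poly ?f s = 0"
      then have "s \<in> S" using allr by auto
      moreover have "s \<noteq> r1" "s \<noteq> r2" using that G_def r(1-3) by auto
      ultimately obtain i where i: "i < m" "s = x i" unfolding S_def by auto
      show False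
      proof (cases "i < j")
        case True
        have "i = j-1 \<or> (i < j-1 \<and> j-1 < m)" using True t(2) by linarith
        then have "x i \<le> x (j-1)" using xmono[of i "j-1"] by auto
        then show False using that G_def i True by auto
      next
        case False
        have "i = j \<or> (j < i \<and> i < m)" using False i by linarith
        then have "x j \<le> x i" using xmono[of j i] by auto
        then show False using that G_def i False by auto
      qed
    qed
    have conv: "G s" if "G u" "G v" "u \<le> s" "s \<le> v" for u v s
      using that unfolding G_def by auto
    show ?thesis
    proof (rule ccontr)
      assume neg: "\<not> ?thesis"
      have ft: "poly ?f t \<noteq> 0" using noroot Gt by auto
      have "poly ?f t * poly ?f (q j) < 0"
        using neg ft qs[OF t(2)] by (cases "even j") (auto simp: sgn_pow mult_pos_neg mult_neg_pos)
      then obtain s where s: "min t (q j) < s" "s < max t (q j)" "poly ?f s = 0"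
      proof (cases "t < q j")
        case True
        then show ?thesis using poly_IVT[OF True] \<open>poly ?f t * poly ?f (q j) < 0\<close> that by fastforce
      next
        case False
        have "q j < t" using False \<open>poly ?f t * poly ?f (q j) < 0\<close> by (cases "q j = t") auto
        then show ?thesis using poly_IVT[OF \<open>q j < t\<close>] \<open>poly ?f t * poly ?f (q j) < 0\<close> that
          by (fastforce simp: mult.commute)
      qed
      have "G s"
      proof (cases "t < q j")
        case True then show ?thesis using conv[OF Gt Gq, of s] s by auto
      next
        case False then show ?thesis using conv[OF Gq Gt, of s] s by auto
      qed
      then show False using noroot s(3) by auto
    qed
  qed
  have "Inv ?f z0 m x" unfolding Inv_def using x xz xmono gapsign by auto
  then show ?thesis using x rr by blast
qed

end

context wsetup begin

lemma left_pt: "k \<ge> 1 \<Longrightarrow> \<exists>L. L < M \<and> poly (W a b c d k) L < 0"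
proof -
  assume "k \<ge> 1"
  then obtain N where "\<forall>x\<le>N. poly (W a b c d k) x < 0" using far_left by blast
  then show ?thesis by (intro exI[of _ "min N (M - 1)"]) auto
qed

lemma main: "n \<ge> 2 \<Longrightarrow> \<exists>x y. Inv (W a b c d n) z0 (n-2) x \<and> Inv (W a b c d (Suc n)) z0 (n-1) y
   \<and> interl (n-2) y x \<and> real_rooted (W a b c d n) \<and> real_rooted (W a b c d (Suc n))"
proof (induction n rule: nat_induct_at_least)
  case base
  obtain x where x: "Inv (W a b c d 2) z0 0 x" "real_rooted (W a b c d 2)"
    using mkInv[of 2 0 "\<lambda>_. z0"] sz0[of 2] by auto
  obtain L where L: "L < z0" "poly (W a b c d 3) L < 0" using left_pt[of 3 z0] by auto
  have "\<exists>y. Inv (W a b c d 3) z0 1 y \<and> real_rooted (W a b c d 3)"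
  proof -
    have q: "(-1)^(j+1) * poly (W a b c d 3) ((\<lambda>i. if i = 0 then L else z0) j) > 0" if "j \<le> 1" for j
      using that L sz0[of 3] by (cases j) auto
    show ?thesis using mkInv[of 3 1 "\<lambda>i. if i = 0 then L else z0", OF _ _ _ _ q] L by auto
  qed
  then obtain y where y: "Inv (W a b c d 3) z0 1 y" "real_rooted (W a b c d 3)" by auto
  have "interl 0 y x" unfolding interl_def by auto
  then show ?case using x y by (auto simp: numeral_3_eq_3 numeral_2_eq_2)
next
  case (Suc n)
  then obtain x y where x: "Inv (W a b c d n) z0 (n-2) x" and y: "Inv (W a b c d (Suc n)) z0 (n-1) y"
    and il: "interl (n-2) y x" and rr: "real_rooted (W a b c d (Suc n))" by auto
  have n2: "n \<ge> 2" by fact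
  obtain L where L: "L < min z0 (y 0)" "poly (W a b c d (Suc (Suc n))) L < 0"
    using left_pt[of "Suc (Suc n)" "min z0 (y 0)"] by auto
  define q where "q k = (if k = 0 then L else if k = n then z0 else y (k-1))" for k
  have yr: "\<And>i. i < n-1 \<Longrightarrow> y i < z0 \<and> poly (W a b c d (Suc n)) (y i) = 0"
    and ym: "\<And>i j. i < j \<Longrightarrow> j < n-1 \<Longrightarrow> y i < y j" using y unfolding Inv_def by auto
  have y0: "L < y i" if "i < n - 1" for i
    using L ym[of 0 i] that by (cases i) auto
  have qmono: "q i < q j" if "i < j" "j \<le> n" for i j
  proof (cases "i = 0")
    case True
    then show ?thesis using that L y0[of "j-1"] by (auto simp: q_def)
  next
    case False
    have "y (i-1) < z0" using yr[of "i-1"] that False by auto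
    moreover have "j < n \<Longrightarrow> y (i-1) < y (j-1)" using ym[of "i-1" "j-1"] that False by auto
    ultimately show ?thesis using that False by (auto simp: q_def)
  qed
  have qs: "(-1)^(j+1) * poly (W a b c d (Suc (Suc n))) (q j) > 0" if "j \<le> n" for j
  proof -
    have jn: "j \<le> n" by fact
    consider "j = 0" | "j = n" | "0 < j" "j < n" using jn by (metis le_neq_implies_less neq0_conv)
    then show ?thesis
    proof cases
      case 1 then show ?thesis using L by (simp add: q_def)
    next
      case 2 then show ?thesis using sz0[of "Suc (Suc n)"] n2 by (simp add: q_def)
    next
      case 3
      define i where "i = j - 1"
      have ij: "j = Suc i" "i < n - 1" using 3 i_def by auto
      have qj: "q j = y i" using 3 i_def by (simp add: q_def)
      have yi: "y i < z0" "poly (W a b c d (Suc n)) (y i) = 0" using yr ij by auto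
      have gap: "(-1)^(i+1) * poly (W a b c d n) (y i) > 0"
      proof -
        have sg: "\<forall>t j. t \<le> z0 \<longrightarrow> j \<le> n-2 \<longrightarrow> (j = 0 \<or> x (j-1) < t) \<longrightarrow> (j = n-2 \<or> t < x j) \<longrightarrow> (-1)^(j+1) * poly (W a b c d n) t > 0"
          using x unfolding Inv_def by blast
        have h1: "i = 0 \<or> x (i-1) < y i" using il ij unfolding interl_def by auto
        have h2: "i = n-2 \<or> y i < x i"
        proof (cases "i < n - 2")
          case True then show ?thesis using il ij unfolding interl_def by auto
        next
          case False then show ?thesis using ij by linarith
        qed
        have h3: "y i \<le> z0" "i \<le> n - 2" using yi ij by auto
        show ?thesis using sg h1 h2 h3 by blast
      qed
      have B: "c * y i + d < 0" using yi(1) z0 cp by (smt (verit) mult_strict_left_mono)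
      have "poly (W a b c d (Suc (Suc n))) (y i) = (c * y i + d) * poly (W a b c d n) (y i)"
        using W_rec[of a b c d n "y i"] yi(2) by (simp del: W.simps)
      then have "(-1)^(j+1) * poly (W a b c d (Suc (Suc n))) (q j)
          = (-(c * y i + d)) * ((-1)^(i+1) * poly (W a b c d n) (y i))"
        using qj ij by (simp add: algebra_simps del: W.simps)
      also have "\<dots> > 0" by (rule mult_pos_pos) (use B gap in linarith)+
      finally show ?thesis .
    qed
  qed
  obtain z where z: "Inv (W a b c d (Suc (Suc n))) z0 n z" "\<forall>j<n. q j < z j \<and> z j < q (Suc j)"
      "real_rooted (W a b c d (Suc (Suc n)))"
    using mkInv[of "Suc (Suc n)" n q, OF _ _ qmono _ qs] n2 by (auto simp: q_def)
  have "interl (n-1) z y" unfolding interl_def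
  proof (intro allI impI)
    fix j assume j: "j \<le> n - 1"
    have zj: "q j < z j \<and> z j < q (Suc j)" using z(2) j n2 by auto
    have jn: "j \<noteq> n" using j n2 by linarith
    have A1: "j = 0 \<or> y (j-1) < z j" using zj jn by (cases "j = 0") (auto simp: q_def)
    have A2: "j < n - 1 \<longrightarrow> z j < y j"
    proof
      assume "j < n - 1"
      then have "Suc j \<noteq> n" by linarith
      then show "z j < y j" using zj by (simp add: q_def)
    qed
    show "(j = 0 \<or> y (j-1) < z j) \<and> (j < n - 1 \<longrightarrow> z j < y j)" using A1 A2 by blast
  qed
  then show ?case using y z rr by auto
qed

end

lemma ppos_lemma:
  fixes a b c d :: real
  assumes an: "a < 0" and bn: "b < 0" and dn: "d < 0" and cp: "c > 0"
    and c1: "2*a*d \<le> c" and c2: "2*(-d+(1-b)^2)/(-b) < c"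
  shows "\<And>k. k \<ge> 2 \<Longrightarrow> (-1)^k * poly (W a b c d k) (-2*d/c) > 0"
proof -
  define p where "p = -2*d/c"
  define h where "h = -(a*p+b)"
  define D where "D = -d"
  define u where "u k = (-1)^k * poly (W a b c d k) p" for k
  have pp: "p > 0" using dn cp by (simp add: p_def divide_neg_pos)
  have cpD: "c * p = 2 * D" using cp by (simp add: p_def D_def)
  have Dp: "D > 0" using dn D_def by simp
  have ap: "-a*p \<le> 1"
  proof -
    have "-a*p = 2*a*d/c" by (simp add: p_def)
    also have "\<dots> \<le> 1" using c1 cp by (simp add: divide_le_eq)
    finally show ?thesis .
  qed
  have h1: "-b \<le> h" using an pp mult_neg_pos[of a p] by (simp add: h_def)
  have h2: "h \<le> 1 - b" using ap h_def by simp
  have hp: "h > 0" using h1 bn by simp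
  have nb: "-b > 0" using bn by simp
  have k0: "2*(-d+(1-b)^2) < c * (-b)" using c2 unfolding pos_divide_less_eq[OF nb] .
  have key0: "2*(D+(1-b)^2) < -b * c" using k0 by (simp add: D_def algebra_simps)
  have key1: "p*(D+(1-b)^2) < -b*D"
  proof -
    have "p*(D+(1-b)^2) * c = 2*D*(D+(1-b)^2)" using cpD by (simp add: algebra_simps)
    also have "\<dots> = D * (2*(D+(1-b)^2))" by (simp add: algebra_simps)
    also have "\<dots> < D * (-b*c)" by (rule mult_strict_left_mono[OF key0 Dp])
    finally have "p*(D+(1-b)^2) * c < (-b*D) * c" by (simp add: algebra_simps)
    then show ?thesis using mult_less_cancel_right_pos[OF cp] by blast
  qed
  have hsq: "h^2 \<le> (1-b)^2" using h2 hp by (intro power_mono) auto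
  have key: "p*(D+h^2) < h*D"
  proof -
    have "p*(D+h^2) \<le> p*(D+(1-b)^2)" using hsq pp by (intro mult_left_mono) auto
    also have "\<dots> < -b*D" by (rule key1)
    also have "\<dots> \<le> h*D" using h1 Dp by (intro mult_right_mono) auto
    finally show ?thesis .
  qed
  have rec: "u (Suc (Suc k)) = h * u (Suc k) + D * u k" for k
  proof -
    have "u (Suc (Suc k)) = (-1)^k * ((a*p+b) * poly (W a b c d (Suc k)) p + (c*p+d) * poly (W a b c d k) p)"
      unfolding u_def by (subst W_rec) simp
    then show ?thesis unfolding u_def h_def D_def using cpD D_def by (simp add: algebra_simps)
  qed
  have u0: "u 0 = 1" by (simp add: u_def)
  have u1: "u 1 = -p" by (simp add: u_def)
  have u2: "u 2 = D - h*p" using rec[of 0] u0 u1 by (simp add: numeral_2_eq_2)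
  have u3: "u 3 = h*(D - h*p) - D*p" using rec[of 1] u2 u1 by (simp add: numeral_3_eq_3 numeral_2_eq_2)
  have u3': "u 3 = h*D - p*(D+h^2)" using u3 by (simp add: algebra_simps power2_eq_square)
  have u3p: "u 3 > 0" using u3' key by linarith
  have u2p: "u 2 > 0"
  proof -
    have "h*(D - h*p) > D*p" using u3p u3 by simp
    moreover have "D*p > 0" using Dp pp by simp
    ultimately have "h*(D-h*p) > 0" by linarith
    then show ?thesis using u2 hp by (simp add: zero_less_mult_iff)
  qed
  have all: "u (k+2) > 0 \<and> u (k+3) > 0" for k
  proof (induction k)
    case 0 then show ?case using u2p u3p by (simp add: numeral_2_eq_2 numeral_3_eq_3)
  next
    case (Suc k)
    have "u (Suc k + 3) = h * u (k+3) + D * u (k+2)"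
      using rec[of "k+2"] by (simp add: numeral_3_eq_3 numeral_2_eq_2)
    also have "\<dots> > 0" using Suc hp Dp by (intro add_pos_pos mult_pos_pos) auto
    finally have n3: "u (Suc k + 3) > 0" .
    have e: "Suc k + 2 = k + 3" by simp
    have n2: "u (Suc k + 2) > 0" using Suc.IH by (simp only: e)
    show ?case using n2 n3 by blast
  qed
  fix k :: nat assume "k \<ge> 2"
  then obtain j where "k = j + 2" by (metis le_add_diff_inverse2)
  then show "(-1)^k * poly (W a b c d k) (-2*d/c) > 0" using all[of j] by (simp add: u_def p_def)
qed

theorem theorem5p1:
  fixes a b d :: real
  assumes "a < 0" and "b < 0" and "d < 0"
  shows "\<exists>cstar::real. \<forall>c::real. c > cstar \<longrightarrow> c \<noteq> 0 \<longrightarrow> (\<forall>n. real_rooted (W a b c d n))"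
proof (intro exI[of _ "max (2*a*d) (2*(-d+(1-b)^2)/(-b))"] allI impI)
  fix c :: real and n :: nat
  assume c: "max (2*a*d) (2*(-d+(1-b)^2)/(-b)) < c"
  have ad: "a * d > 0" using assms by (simp add: mult_neg_neg)
  have cp: "c > 0" using c ad by linarith
  have c1: "2*a*d \<le> c" using c by linarith
  have c2: "2*(-d+(1-b)^2)/(-b) < c" using c by linarith
  have z0: "c * (-d/c) + d = 0" using cp by simp
  have pz: "-d/c < -2*d/c" using cp assms(3) by (simp add: divide_strict_right_mono)
  interpret wsetup a b c d "-d/c" "-2*d/c"
    using assms cp z0 pz ppos_lemma[OF assms(1,2,3) cp c1 c2] by unfold_locales auto
  show "real_rooted (W a b c d n)"
  proof (cases "n \<ge> 2")
    case True then show ?thesis using main by blast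
  next
    case False
    then have "n = 0 \<or> n = 1" by auto
    then show ?thesis
    proof
      assume "n = 0" then show ?thesis by (simp add: real_rooted_def)
    next
      assume "n = 1"
      then have "map_poly complex_of_real (W a b c d n) = [:0, 1:]" by (simp add: map_poly_pCons)
      then show ?thesis by (simp add: real_rooted_def)
    qed
  qed
qed

end
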